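(* Let $\mathcal{L}=(\mathrm{Fm},\vdash)$ be a selfextensional logic, $N\subseteq\mathrm{Fm}\times\mathrm{Fm}$ a normative system, $P\subseteq P_N$ a conditional permission system, and $(\mathrm{X})\in\{(\top),(\mathrm{SI}),(\mathrm{WO})\}$. Then: 1. $S^{(\mathrm{AND})}(P,N)$ is closed under $(\mathrm{AND})^{\downarrow}$. 2. $S^{(\mathrm{OR})}(P,N)$ is closed under $(\mathrm{OR})^{\downarrow}$. 3. If $N^{(\mathrm{CT})}$ and $N^{(\mathrm{CT})}_{(\beta,\gamma)}$ are closed under (AND) for every $(\beta,\gamma)\in P$, then $S^{(\mathrm{CT})}(P,N)$ is closed under $(\mathrm{CT})^{\downarrow}$. 4. $S^{(\mathrm{X})}(P,N)$ is closed under (X). 5. For $1\le i\le4$, if $S^i(P,N)$ is closed under (SI) and $(\mathrm{CT})^{\downarrow}$, then $S^i(P,N)$ is closed under $(\mathrm{AND})^{\downarrow}$.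
   Context: $Cn(\Gamma)=\{\psi\mid\Gamma\vdash\psi\}$, $Cn(\varphi,\psi)=Cn(\{\varphi,\psi\})$. Standing convention: rules mentioning $\wedge,\vee,\top$ are considered only for logics having a term $\wedge$ with $Cn(\varphi\wedge\psi)=Cn(\{\varphi,\psi\})$, a term $\vee$ with $Cn(\varphi\vee\psi)=Cn(\varphi)\cap Cn(\psi)$, a constant $\top$ with $\top\in Cn(\varphi)$ for all $\varphi$, respectively. Rules on a relation $R\subseteq\mathrm{Fm}\times\mathrm{Fm}$: $(\top)$: $(\top,\top)\in R$; (SI): $(\alpha,\varphi)\in R,\beta\vdash\alpha\Rightarrow(\beta,\varphi)\in R$; (WO): $(\alpha,\varphi)\in R,\varphi\vdash\psi\Rightarrow(\alpha,\psi)\in R$; (AND): $(\alpha,\varphi),(\alpha,\psi)\in R\Rightarrow(\alpha,\varphi\wedge\psi)\in R$; (OR): $(\alpha,\varphi),(\beta,\varphi)\in R\Rightarrow(\alpha\vee\beta,\varphi)\in R$; (CT): $(\alpha,\varphi),(\alpha\wedge\varphi,\psi)\in R\Rightarrow(\alpha,\psi)\in R$. Rules relating $R$ to $N$: $(\mathrm{AND})^{\downarrow}$: $(\alpha,\varphi)\in N,(\alpha,\psi)\in R\Rightarrow(\alpha,\varphi\wedge\psi)\in R$; $(\mathrm{OR})^{\downarrow}$: $(\alpha,\varphi)\in N,(\beta,\varphi)\in R\Rightarrow(\alpha\vee\beta,\varphi)\in R$; $(\mathrm{CT})^{\downarrow}$: $(\alpha,\varphi)\in N,(\alpha\wedge\varphi,\psi)\in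 R\Rightarrow(\alpha,\varphi\wedge\psi)\in R$. $N^{(\mathrm{R})}$ is the smallest extension of $N$ closed under the single rule (R); $N^{(\mathrm{R})}_{(\alpha,\varphi)}$ the smallest extension of $N\cup\{(\alpha,\varphi)\}$ closed under (R); $N^i$, $N^i_{(\alpha,\varphi)}$ the same for the rule sets $i=1$: $(\top)$,(SI),(WO),(AND); $i=2$: plus (OR); $i=3$: $(\top)$,(SI),(WO),(AND),(CT); $i=4$: all six. $S^{(\mathrm{R})}(P,N)=\bigcup\{N^{(\mathrm{R})}_{(\alpha,\varphi)}\mid(\alpha,\varphi)\in P\}$ if $P\neq\varnothing$, and $N^{(\mathrm{R})}$ if $P=\varnothing$; $S^i(P,N)$ analogously with $N^i$. $P_N=\{(\alpha,\varphi)\mid\forall\psi((\alpha,\psi)\in N\Rightarrow Cn(\varphi,\psi)\neq\mathrm{Fm})\}$. *)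

theory Defs
  imports Main
begin

datatype ('v, 'c) fm = Var 'v | Op 'c "('v, 'c) fm list"

primrec subst :: "('v \<Rightarrow> ('v, 'c) fm) \<Rightarrow> ('v, 'c) fm \<Rightarrow> ('v, 'c) fm" where
  "subst \<sigma> (Var v) = \<sigma> v"
| "subst \<sigma> (Op c xs) = Op c (map (subst \<sigma>) xs)"

primrec vars :: "('v, 'c) fm \<Rightarrow> 'v set" where
  "vars (Var v) = {v}"
| "vars (Op c xs) = \<Union> (set (map vars xs))"

type_synonym ('v, 'c) cr = "('v, 'c) fm set \<Rightarrow> ('v, 'c) fm \<Rightarrow> bool"
type_synonym ('v, 'c) frel = "(('v, 'c) fm \<times> ('v, 'c) fm) set"

definition logic :: "('v, 'c) cr \<Rightarrow> bool" where
  "logic der \<longleftrightarrow>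
     (\<forall>\<Gamma> \<phi>. \<phi> \<in> \<Gamma> \<longrightarrow> der \<Gamma> \<phi>) \<and>
     (\<forall>\<Gamma> \<Delta> \<phi>. \<Gamma> \<subseteq> \<Delta> \<longrightarrow> der \<Gamma> \<phi> \<longrightarrow> der \<Delta> \<phi>) \<and>
     (\<forall>\<Gamma> \<Delta> \<phi>. (\<forall>\<psi>\<in>\<Delta>. der \<Gamma> \<psi>) \<longrightarrow> der (\<Gamma> \<union> \<Delta>) \<phi> \<longrightarrow> der \<Gamma> \<phi>) \<and>
     (\<forall>\<Gamma> \<phi> \<sigma>. der \<Gamma> \<phi> \<longrightarrow> der (subst \<sigma> ` \<Gamma>) (subst \<sigma> \<phi>))"

definition Cn :: "('v, 'c) cr \<Rightarrow> ('v, 'c) fm set \<Rightarrow> ('v, 'c) fm set" where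
  "Cn der \<Gamma> = {\<psi>. der \<Gamma> \<psi>}"

definition selfextensional :: "('v, 'c) cr \<Rightarrow> bool" where
  "selfextensional der \<longleftrightarrow>
     (\<forall>c xs ys. list_all2 (\<lambda>x y. der {x} y \<and> der {y} x) xs ys
        \<longrightarrow> der {Op c xs} (Op c ys) \<and> der {Op c ys} (Op c xs))"

definition is_binary_term :: "(('v, 'c) fm \<Rightarrow> ('v, 'c) fm \<Rightarrow> ('v, 'c) fm) \<Rightarrow> bool" where
  "is_binary_term f \<longleftrightarrow> (\<exists>t p q. p \<noteq> q \<and> vars t \<subseteq> {p, q} \<and>
     (\<forall>\<phi> \<psi>. f \<phi> \<psi> = subst ((Var(p := \<phi>))(q := \<psi>)) t))"

definition has_conj :: "('v, 'c) cr \<Rightarrow> (('v, 'c) fm \<Rightarrow> ('v, 'c) fm \<Rightarrow> ('v, 'c) fm) \<Rightarrow> bool" where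
  "has_conj der cj \<longleftrightarrow> is_binary_term cj \<and>
     (\<forall>\<phi> \<psi>. Cn der {cj \<phi> \<psi>} = Cn der {\<phi>, \<psi>})"

definition has_disj :: "('v, 'c) cr \<Rightarrow> (('v, 'c) fm \<Rightarrow> ('v, 'c) fm \<Rightarrow> ('v, 'c) fm) \<Rightarrow> bool" where
  "has_disj der dj \<longleftrightarrow> is_binary_term dj \<and>
     (\<forall>\<phi> \<psi>. Cn der {dj \<phi> \<psi>} = Cn der {\<phi>} \<inter> Cn der {\<psi>})"

definition has_top :: "('v, 'c) cr \<Rightarrow> ('v, 'c) fm \<Rightarrow> bool" where
  "has_top der tp \<longleftrightarrow> vars tp = {} \<and> (\<forall>\<phi>. tp \<in> Cn der {\<phi>})"

definition rTop :: "('v, 'c) fm \<Rightarrow> ('v, 'c) frel \<Rightarrow> bool" where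
  "rTop tp R \<longleftrightarrow> (tp, tp) \<in> R"

definition rSI :: "('v, 'c) cr \<Rightarrow> ('v, 'c) frel \<Rightarrow> bool" where
  "rSI der R \<longleftrightarrow> (\<forall>\<alpha> \<phi> \<beta>. (\<alpha>, \<phi>) \<in> R \<longrightarrow> der {\<beta>} \<alpha> \<longrightarrow> (\<beta>, \<phi>) \<in> R)"

definition rWO :: "('v, 'c) cr \<Rightarrow> ('v, 'c) frel \<Rightarrow> bool" where
  "rWO der R \<longleftrightarrow> (\<forall>\<alpha> \<phi> \<psi>. (\<alpha>, \<phi>) \<in> R \<longrightarrow> der {\<phi>} \<psi> \<longrightarrow> (\<alpha>, \<psi>) \<in> R)"

definition rAND :: "(('v, 'c) fm \<Rightarrow> ('v, 'c) fm \<Rightarrow> ('v, 'c) fm) \<Rightarrow> ('v, 'c) frel \<Rightarrow> bool" where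
  "rAND cj R \<longleftrightarrow> (\<forall>\<alpha> \<phi> \<psi>. (\<alpha>, \<phi>) \<in> R \<longrightarrow> (\<alpha>, \<psi>) \<in> R \<longrightarrow> (\<alpha>, cj \<phi> \<psi>) \<in> R)"

definition rOR :: "(('v, 'c) fm \<Rightarrow> ('v, 'c) fm \<Rightarrow> ('v, 'c) fm) \<Rightarrow> ('v, 'c) frel \<Rightarrow> bool" where
  "rOR dj R \<longleftrightarrow> (\<forall>\<alpha> \<beta> \<phi>. (\<alpha>, \<phi>) \<in> R \<longrightarrow> (\<beta>, \<phi>) \<in> R \<longrightarrow> (dj \<alpha> \<beta>, \<phi>) \<in> R)"

definition rCT :: "(('v, 'c) fm \<Rightarrow> ('v, 'c) fm \<Rightarrow> ('v, 'c) fm) \<Rightarrow> ('v, 'c) frel \<Rightarrow> bool" where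
  "rCT cj R \<longleftrightarrow> (\<forall>\<alpha> \<phi> \<psi>. (\<alpha>, \<phi>) \<in> R \<longrightarrow> (cj \<alpha> \<phi>, \<psi>) \<in> R \<longrightarrow> (\<alpha>, \<psi>) \<in> R)"

definition rAND_down :: "(('v, 'c) fm \<Rightarrow> ('v, 'c) fm \<Rightarrow> ('v, 'c) fm) \<Rightarrow> ('v, 'c) frel \<Rightarrow> ('v, 'c) frel \<Rightarrow> bool" where
  "rAND_down cj N R \<longleftrightarrow> (\<forall>\<alpha> \<phi> \<psi>. (\<alpha>, \<phi>) \<in> N \<longrightarrow> (\<alpha>, \<psi>) \<in> R \<longrightarrow> (\<alpha>, cj \<phi> \<psi>) \<in> R)"

definition rOR_down :: "(('v, 'c) fm \<Rightarrow> ('v, 'c) fm \<Rightarrow> ('v, 'c) fm) \<Rightarrow> ('v, 'c) frel \<Rightarrow> ('v, 'c) frel \<Rightarrow> bool" where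
  "rOR_down dj N R \<longleftrightarrow> (\<forall>\<alpha> \<beta> \<phi>. (\<alpha>, \<phi>) \<in> N \<longrightarrow> (\<beta>, \<phi>) \<in> R \<longrightarrow> (dj \<alpha> \<beta>, \<phi>) \<in> R)"

definition rCT_down :: "(('v, 'c) fm \<Rightarrow> ('v, 'c) fm \<Rightarrow> ('v, 'c) fm) \<Rightarrow> ('v, 'c) frel \<Rightarrow> ('v, 'c) frel \<Rightarrow> bool" where
  "rCT_down cj N R \<longleftrightarrow> (\<forall>\<alpha> \<phi> \<psi>. (\<alpha>, \<phi>) \<in> N \<longrightarrow> (cj \<alpha> \<phi>, \<psi>) \<in> R \<longrightarrow> (\<alpha>, cj \<phi> \<psi>) \<in> R)"

definition closure :: "(('v, 'c) frel \<Rightarrow> bool) \<Rightarrow> ('v, 'c) frel \<Rightarrow> ('v, 'c) frel" where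
  "closure cl N = \<Inter> {R. N \<subseteq> R \<and> cl R}"

definition Sys :: "(('v, 'c) frel \<Rightarrow> bool) \<Rightarrow> ('v, 'c) frel \<Rightarrow> ('v, 'c) frel \<Rightarrow> ('v, 'c) frel" where
  "Sys cl P N = (if P = {} then closure cl N else (\<Union>x\<in>P. closure cl (insert x N)))"

definition ruleset ::
  "('v, 'c) cr \<Rightarrow> (('v, 'c) fm \<Rightarrow> ('v, 'c) fm \<Rightarrow> ('v, 'c) fm) \<Rightarrow> (('v, 'c) fm \<Rightarrow> ('v, 'c) fm \<Rightarrow> ('v, 'c) fm)
     \<Rightarrow> ('v, 'c) fm \<Rightarrow> nat \<Rightarrow> ('v, 'c) frel \<Rightarrow> bool" where
  "ruleset der cj dj tp i R \<longleftrightarrow>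
     rTop tp R \<and> rSI der R \<and> rWO der R \<and> rAND cj R \<and>
     (i \<in> {2, 4} \<longrightarrow> rOR dj R) \<and> (i \<in> {3, 4} \<longrightarrow> rCT cj R)"

definition PN :: "('v, 'c) cr \<Rightarrow> ('v, 'c) frel \<Rightarrow> ('v, 'c) frel" where
  "PN der N = {(\<alpha>, \<phi>). \<forall>\<psi>. (\<alpha>, \<psi>) \<in> N \<longrightarrow> Cn der {\<phi>, \<psi>} \<noteq> UNIV}"

end

theory Submission
  imports Defs
begin


lemma cl_Inter:
  assumes "\<And>F. (\<forall>R\<in>F. cl R) \<Longrightarrow> cl (\<Inter>F)"
  shows "cl (closure cl N)" "N \<subseteq> closure cl N"
  unfolding closure_def using assms by auto

lemma closure_min: "N \<subseteq> R \<Longrightarrow> cl R \<Longrightarrow> closure cl N \<subseteq> R"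
  unfolding closure_def by auto

lemma AND_Inter: "(\<forall>R\<in>F. rAND cj R) \<Longrightarrow> rAND cj (\<Inter>F)"
  unfolding rAND_def by blast
lemma OR_Inter: "(\<forall>R\<in>F. rOR dj R) \<Longrightarrow> rOR dj (\<Inter>F)"
  unfolding rOR_def by blast
lemma CT_Inter: "(\<forall>R\<in>F. rCT cj R) \<Longrightarrow> rCT cj (\<Inter>F)"
  unfolding rCT_def by blast
lemma Top_Inter: "(\<forall>R\<in>F. rTop tp R) \<Longrightarrow> rTop tp (\<Inter>F)"
  unfolding rTop_def by blast
lemma SI_Inter: "(\<forall>R\<in>F. rSI der R) \<Longrightarrow> rSI der (\<Inter>F)"
  unfolding rSI_def by blast
lemma WO_Inter: "(\<forall>R\<in>F. rWO der R) \<Longrightarrow> rWO der (\<Inter>F)"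
  unfolding rWO_def by blast

lemma AND_cl: "rAND cj (closure (rAND cj) N)" "N \<subseteq> closure (rAND cj) N"
  by (rule cl_Inter, erule AND_Inter)+
lemma OR_cl: "rOR dj (closure (rOR dj) N)" "N \<subseteq> closure (rOR dj) N"
  by (rule cl_Inter, erule OR_Inter)+
lemma Top_cl: "rTop tp (closure (rTop tp) N)" "N \<subseteq> closure (rTop tp) N"
  by (rule cl_Inter, erule Top_Inter)+
lemma SI_cl: "rSI der (closure (rSI der) N)" "N \<subseteq> closure (rSI der) N"
  by (rule cl_Inter, erule SI_Inter)+
lemma WO_cl: "rWO der (closure (rWO der) N)" "N \<subseteq> closure (rWO der) N"
  by (rule cl_Inter, erule WO_Inter)+

lemma Sys_cases:
  assumes "z \<in> Sys cl P N"
  obtains M where "N \<subseteq> M" "z \<in> closure cl M" "closure cl M \<subseteq> Sys cl P N"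
proof (cases "P = {}")
  case True
  then show ?thesis using assms that[of N] unfolding Sys_def by simp
next
  case False
  then obtain x where x: "x \<in> P" "z \<in> closure cl (insert x N)" using assms unfolding Sys_def by auto
  have "closure cl (insert x N) \<subseteq> Sys cl P N" using x False unfolding Sys_def by auto
  then show ?thesis using x that[of "insert x N"] by blast
qed

lemma Sys_sub: "x \<in> P \<Longrightarrow> closure cl (insert x N) \<subseteq> Sys cl P N"
  unfolding Sys_def by auto

lemma part1: "rAND_down cj N (Sys (rAND cj) P N)"
  unfolding rAND_down_def
proof (intro allI impI)
  fix \<alpha> \<phi> \<psi> assume n: "(\<alpha>, \<phi>) \<in> N" and s: "(\<alpha>, \<psi>) \<in> Sys (rAND cj) P N"
  from s obtain M where M: "N \<subseteq> M" "(\<alpha>, \<psi>) \<in> closure (rAND cj) M" "closure (rAND cj) M \<subseteq> Sys (rAND cj) P N"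
    by (rule Sys_cases)
  have "(\<alpha>, \<phi>) \<in> closure (rAND cj) M" using AND_cl(2)[where N=M and cj=cj] M(1) n by blast
  hence "(\<alpha>, cj \<phi> \<psi>) \<in> closure (rAND cj) M" using AND_cl(1)[where N=M and cj=cj] M(2) unfolding rAND_def by blast
  thus "(\<alpha>, cj \<phi> \<psi>) \<in> Sys (rAND cj) P N" using M(3) by blast
qed

lemma part2: "rOR_down dj N (Sys (rOR dj) P N)"
  unfolding rOR_down_def
proof (intro allI impI)
  fix \<alpha> \<beta> \<phi> assume n: "(\<alpha>, \<phi>) \<in> N" and s: "(\<beta>, \<phi>) \<in> Sys (rOR dj) P N"
  from s obtain M where M: "N \<subseteq> M" "(\<beta>, \<phi>) \<in> closure (rOR dj) M" "closure (rOR dj) M \<subseteq> Sys (rOR dj) P N"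
    by (rule Sys_cases)
  have "(\<alpha>, \<phi>) \<in> closure (rOR dj) M" using OR_cl(2)[where N=M and dj=dj] M(1) n by blast
  hence "(dj \<alpha> \<beta>, \<phi>) \<in> closure (rOR dj) M" using OR_cl(1)[where N=M and dj=dj] M(2) unfolding rOR_def by blast
  thus "(dj \<alpha> \<beta>, \<phi>) \<in> Sys (rOR dj) P N" using M(3) by blast
qed

lemma part3:
  assumes "rAND cj (closure (rCT cj) N)" "\<forall>x\<in>P. rAND cj (closure (rCT cj) (insert x N))"
  shows "rCT_down cj N (Sys (rCT cj) P N)"
proof -
  have CT: "rCT cj (closure (rCT cj) M)" "M \<subseteq> closure (rCT cj) M" for M
    by (rule cl_Inter, erule CT_Inter)+
  have key: "(\<alpha>, cj \<phi> \<psi>) \<in> closure (rCT cj) M"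
    if "rAND cj (closure (rCT cj) M)" "N \<subseteq> M" "(\<alpha>, \<phi>) \<in> N" "(cj \<alpha> \<phi>, \<psi>) \<in> closure (rCT cj) M"
    for M \<alpha> \<phi> \<psi>
  proof -
    have a: "(\<alpha>, \<phi>) \<in> closure (rCT cj) M" using that CT(2)[of M] by blast
    have "(\<alpha>, \<psi>) \<in> closure (rCT cj) M" using CT(1)[of M] a that(4) unfolding rCT_def by blast
    then show ?thesis using that(1) a unfolding rAND_def by blast
  qed
  show ?thesis unfolding rCT_down_def
  proof (intro allI impI)
    fix \<alpha> \<phi> \<psi> assume n: "(\<alpha>, \<phi>) \<in> N" and s: "(cj \<alpha> \<phi>, \<psi>) \<in> Sys (rCT cj) P N"
    show "(\<alpha>, cj \<phi> \<psi>) \<in> Sys (rCT cj) P N"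
    proof (cases "P = {}")
      case True
      then show ?thesis using key[of N] assms(1) n s unfolding Sys_def by simp
    next
      case False
      then obtain x where x: "x \<in> P" "(cj \<alpha> \<phi>, \<psi>) \<in> closure (rCT cj) (insert x N)"
        using s unfolding Sys_def by auto
      have "(\<alpha>, cj \<phi> \<psi>) \<in> closure (rCT cj) (insert x N)"
        using key[of "insert x N"] x assms(2) n by blast
      then show ?thesis using Sys_sub[OF x(1), of "rCT cj" N] by blast
    qed
  qed
qed

lemma part4: "rTop tp (Sys (rTop tp) P N)"
  unfolding Sys_def using Top_cl(1)[of tp] unfolding rTop_def by auto

lemma unary_Sys:
  fixes rX :: "('v, 'c) frel \<Rightarrow> bool" and f :: "('v, 'c) fm \<times> ('v, 'c) fm \<Rightarrow> ('v, 'c) fm \<times> ('v, 'c) fm \<Rightarrow> bool"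
  assumes cl: "\<And>M. rX (closure rX M)"
    and loc: "\<And>R. rX R \<longleftrightarrow> (\<forall>z\<in>R. \<forall>w. f z w \<longrightarrow> w \<in> R)"
  shows "rX (Sys rX P N)"
proof -
  have "w \<in> Sys rX P N" if z: "z \<in> Sys rX P N" and fw: "f z w" for z w
  proof -
    from z obtain M where M: "N \<subseteq> M" "z \<in> closure rX M" "closure rX M \<subseteq> Sys rX P N"
      by (rule Sys_cases)
    have "w \<in> closure rX M" using cl[of M] M(2) fw loc[of "closure rX M"] by blast
    with M(3) show ?thesis by blast
  qed
  thus ?thesis using loc[of "Sys rX P N"] by blast
qed

lemma part5: "rSI der (Sys (rSI der) P N)"
proof (rule unary_Sys[where f="\<lambda>z w. snd w = snd z \<and> der {fst w} (fst z)"])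
  show "rSI der (closure (rSI der) M)" for M by (rule SI_cl(1))
  show "rSI der R = (\<forall>z\<in>R. \<forall>w. snd w = snd z \<and> der {fst w} (fst z) \<longrightarrow> w \<in> R)" for R
    unfolding rSI_def
  proof
    assume H: "\<forall>\<alpha> \<phi> \<beta>. (\<alpha>, \<phi>) \<in> R \<longrightarrow> der {\<beta>} \<alpha> \<longrightarrow> (\<beta>, \<phi>) \<in> R"
    show "\<forall>z\<in>R. \<forall>w. snd w = snd z \<and> der {fst w} (fst z) \<longrightarrow> w \<in> R"
    proof (intro ballI allI impI)
      fix z w assume z: "z \<in> R" and c: "snd w = snd z \<and> der {fst w} (fst z)"
      have "(fst z, snd z) \<in> R" using z by simp
      hence "(fst w, snd z) \<in> R" using H c by blast
      thus "w \<in> R" using c by (metis prod.collapse)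
    qed
  next
    assume H: "\<forall>z\<in>R. \<forall>w. snd w = snd z \<and> der {fst w} (fst z) \<longrightarrow> w \<in> R"
    show "\<forall>\<alpha> \<phi> \<beta>. (\<alpha>, \<phi>) \<in> R \<longrightarrow> der {\<beta>} \<alpha> \<longrightarrow> (\<beta>, \<phi>) \<in> R"
    proof (intro allI impI)
      fix \<alpha> \<phi> \<beta> assume a: "(\<alpha>, \<phi>) \<in> R" "der {\<beta>} \<alpha>"
      show "(\<beta>, \<phi>) \<in> R" using H a(1) a(2) by fastforce
    qed
  qed
qed

lemma part6: "rWO der (Sys (rWO der) P N)"
proof (rule unary_Sys[where f="\<lambda>z w. fst w = fst z \<and> der {snd z} (snd w)"])
  show "rWO der (closure (rWO der) M)" for M by (rule WO_cl(1))
  show "rWO der R = (\<forall>z\<in>R. \<forall>w. fst w = fst z \<and> der {snd z} (snd w) \<longrightarrow> w \<in> R)" for R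
    unfolding rWO_def
  proof
    assume H: "\<forall>\<alpha> \<phi> \<psi>. (\<alpha>, \<phi>) \<in> R \<longrightarrow> der {\<phi>} \<psi> \<longrightarrow> (\<alpha>, \<psi>) \<in> R"
    show "\<forall>z\<in>R. \<forall>w. fst w = fst z \<and> der {snd z} (snd w) \<longrightarrow> w \<in> R"
    proof (intro ballI allI impI)
      fix z w assume z: "z \<in> R" and c: "fst w = fst z \<and> der {snd z} (snd w)"
      have "(fst z, snd z) \<in> R" using z by simp
      hence "(fst z, snd w) \<in> R" using H c by blast
      thus "w \<in> R" using c by (metis prod.collapse)
    qed
  next
    assume H: "\<forall>z\<in>R. \<forall>w. fst w = fst z \<and> der {snd z} (snd w) \<longrightarrow> w \<in> R"
    show "\<forall>\<alpha> \<phi> \<psi>. (\<alpha>, \<phi>) \<in> R \<longrightarrow> der {\<phi>} \<psi> \<longrightarrow> (\<alpha>, \<psi>) \<in> R"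
    proof (intro allI impI)
      fix \<alpha> \<phi> \<psi> assume a: "(\<alpha>, \<phi>) \<in> R" "der {\<phi>} \<psi>"
      show "(\<alpha>, \<psi>) \<in> R" using H a(1) a(2) by fastforce
    qed
  qed
qed

lemma part7:
  assumes logic: "logic der" and hc: "has_conj der cj"
    and si: "rSI der S" and ct: "rCT_down cj N S"
  shows "rAND_down cj N S"
  unfolding rAND_down_def
proof (intro allI impI)
  fix \<alpha> \<phi> \<psi> assume n: "(\<alpha>, \<phi>) \<in> N" and s: "(\<alpha>, \<psi>) \<in> S"
  have refl: "\<forall>\<Gamma> \<phi>. \<phi> \<in> \<Gamma> \<longrightarrow> der \<Gamma> \<phi>" using logic unfolding logic_def by (rule conjunct1)
  have "der {\<alpha>, \<phi>} \<alpha>" using refl by simp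
  hence "\<alpha> \<in> Cn der {\<alpha>, \<phi>}" unfolding Cn_def by simp
  moreover have "Cn der {cj \<alpha> \<phi>} = Cn der {\<alpha>, \<phi>}" using hc unfolding has_conj_def by blast
  ultimately have "\<alpha> \<in> Cn der {cj \<alpha> \<phi>}" by simp
  hence "der {cj \<alpha> \<phi>} \<alpha>" unfolding Cn_def by simp
  hence "(cj \<alpha> \<phi>, \<psi>) \<in> S" using si s unfolding rSI_def by blast
  thus "(\<alpha>, cj \<phi> \<psi>) \<in> S" using ct n unfolding rCT_down_def by blast
qed

theorem proposition4p13:
  fixes der :: "('v, 'c) fm set \<Rightarrow> ('v, 'c) fm \<Rightarrow> bool"
    and N P :: "(('v, 'c) fm \<times> ('v, 'c) fm) set"
    and cj dj :: "('v, 'c) fm \<Rightarrow> ('v, 'c) fm \<Rightarrow> ('v, 'c) fm"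
    and tp :: "('v, 'c) fm"
  assumes vars_inf: "infinite (UNIV :: 'v set)"
    and logic: "logic der"
    and selfext: "selfextensional der"
    and P_sub: "P \<subseteq> PN der N"
  shows
    "(has_conj der cj \<longrightarrow> rAND_down cj N (Sys (rAND cj) P N))
     \<and> (has_disj der dj \<longrightarrow> rOR_down dj N (Sys (rOR dj) P N))
     \<and> (has_conj der cj \<longrightarrow>
          rAND cj (closure (rCT cj) N) \<and> (\<forall>x\<in>P. rAND cj (closure (rCT cj) (insert x N)))
          \<longrightarrow> rCT_down cj N (Sys (rCT cj) P N))
     \<and> (has_top der tp \<longrightarrow> rTop tp (Sys (rTop tp) P N))
     \<and> rSI der (Sys (rSI der) P N)
     \<and> rWO der (Sys (rWO der) P N)
     \<and> (\<forall>i\<in>{1..4::nat}.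
          has_conj der cj \<and> has_top der tp \<and> (i \<in> {2, 4} \<longrightarrow> has_disj der dj) \<longrightarrow>
          rSI der (Sys (ruleset der cj dj tp i) P N)
          \<and> rCT_down cj N (Sys (ruleset der cj dj tp i) P N)
          \<longrightarrow> rAND_down cj N (Sys (ruleset der cj dj tp i) P N))"
  apply (intro conjI impI ballI)
  apply (rule part1)
  apply (rule part2)
  apply (rule part3; simp)
  apply (rule part4)
  apply (rule part5)
  apply (rule part6)
  apply (rule part7[OF logic]; simp)
  done

end
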